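(* Let $a$, $b$, $c$ be positive integers with $c$ even. Then for all integers $p,q\geq1$ and all $x,y,z\in\mathbb{R}$, \begin{align*} a^{1-p}b^{1-q}S^{(2)}_{p,q}(a,b,c:x,y,z) &=-\frac{q}{2}\sum_{j=0}^{p}\binom{p}{j}a^{1-j}c^{1+j-p-q}S^{(1)}_{p+q-j,j}(c,-a,b:z,x,y)\\ &\quad-\frac{p}{2}\sum_{h=0}^{q}\binom{q}{h}(-1)^{h}b^{1-h}c^{1+h-p-q}S^{(1)}_{p+q-h,h}(c,b,a:z,-y,x). \end{align*}
   Context: $B_n(x)$ is the $n$th Bernoulli polynomial ($\frac{te^{xt}}{e^t-1}=\sum B_n(x)\frac{t^n}{n!}$) and $\mathcal{B}_n(x)=B_n(x-[x])$ the $n$th Bernoulli function ($[x]$ the largest integer $\le x$; $\mathcal{B}_0\equiv1$). $E_n(x)$ is the $n$th Euler polynomial ($\frac{2e^{xt}}{e^t+1}=\sum E_n(x)\frac{t^n}{n!}$), and the Euler function $\mathcal{E}_n$ ($n\ge0$) is defined by $\mathcal{E}_n(x)=E_n(x)$ for $0\le x<1$ and $\mathcal{E}_n(x+m)=(-1)^m\mathcal{E}_n(x)$ for $m\in\mathbb{Z}$. For integers $a,b$, a positive integer $c$, and real $x,y,z$ define, for integers $p\ge1$, $q\ge0$, $$S^{(1)}_{p,q}(a,b,c:x,y,z)=\sum_{\mu=0}^{c-1}\mathcal{E}_{p-1}\Big(a\frac{\mu+z}{c}+x\Big)\mathcal{B}_{q}\Big(b\frac{\mu+z}{c}+y\Big),$$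 and, for integers $p,q\ge1$, $$S^{(2)}_{p,q}(a,b,c:x,y,z)=\sum_{\mu=0}^{c-1}(-1)^{\mu}\mathcal{B}_{p}\Big(a\frac{\mu+z}{c}+x\Big)\mathcal{B}_{q}\Big(b\frac{\mu+z}{c}+y\Big).$$ *)

theory Defs
  imports "HOL-Computational_Algebra.Formal_Power_Series"
begin

definition bernpoly :: "nat \<Rightarrow> real \<Rightarrow> real" where
  "bernpoly n x = fact n * fps_nth ((fps_X * fps_exp x) / (fps_exp 1 - 1)) n"

definition eulerpoly :: "nat \<Rightarrow> real \<Rightarrow> real" where
  "eulerpoly n x = fact n * fps_nth ((2 * fps_exp x) / (fps_exp 1 + 1)) n"

definition bernfun :: "nat \<Rightarrow> real \<Rightarrow> real" where
  "bernfun n x = bernpoly n (x - of_int \<lfloor>x\<rfloor>)"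

definition eulerfun :: "nat \<Rightarrow> real \<Rightarrow> real" where
  "eulerfun n x = (-1) powi \<lfloor>x\<rfloor> * eulerpoly n (x - of_int \<lfloor>x\<rfloor>)"

text \<open>S^(1)_{p,q}(a,b,c:x,y,z), meaningful for p >= 1\<close>
definition S1 :: "nat \<Rightarrow> nat \<Rightarrow> int \<Rightarrow> int \<Rightarrow> int \<Rightarrow> real \<Rightarrow> real \<Rightarrow> real \<Rightarrow> real" where
  "S1 p q a b c x y z =
     (\<Sum>\<mu>\<in>{0..<c}. eulerfun (p - 1) (of_int a * (of_int \<mu> + z) / of_int c + x)
                   * bernfun q (of_int b * (of_int \<mu> + z) / of_int c + y))"

definition S2 :: "nat \<Rightarrow> nat \<Rightarrow> int \<Rightarrow> int \<Rightarrow> int \<Rightarrow> real \<Rightarrow> real \<Rightarrow> real \<Rightarrow> real" where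
  "S2 p q a b c x y z =
     (\<Sum>\<mu>\<in>{0..<c}. (-1) powi \<mu>
                   * bernfun p (of_int a * (of_int \<mu> + z) / of_int c + x)
                   * bernfun q (of_int b * (of_int \<mu> + z) / of_int c + y))"

end

theory Submission
  imports Defs "HOL-Computational_Algebra.Formal_Laurent_Series"
begin

lemma powi_m1: "(-1::real) powi k = (if even k then 1 else -1)"
proof (cases "k \<ge> 0")
  case True
  then obtain n where "k = int n" by (metis nonneg_int_cases)
  then show ?thesis by (simp add: power_int_of_nat)
next
  case False
  then obtain n where "- k = int n" using nonneg_int_cases[of "-k"] by auto
  then have "k = - int n" by simp
  then show ?thesis by (simp add: power_int_minus power_int_of_nat)
qed

definition ex :: "real \<Rightarrow> real fls" where "ex r = fps_to_fls (fps_exp r)"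

lemma ex_add: "ex (r + s) = ex r * ex s"
  by (simp add: ex_def fps_exp_add_mult fls_times_fps_to_fls)

lemma ex_zero[simp]: "ex 0 = 1"
  by (simp add: ex_def)

lemma ex_nz[simp]: "ex r \<noteq> 0"
proof -
  have "fps_exp r \<noteq> 0" by (metis fps_exp_nth fps_zero_nth div_by_1 fact_0 of_nat_1 power_0 zero_neq_one)
  then show ?thesis by (simp add: ex_def)
qed

lemma ex_diff: "ex (r - s) = ex r / ex s"
  using ex_add[of "r - s" s] by (simp add: field_simps)

lemma ex_power: "ex r ^ n = ex (of_nat n * r)"
  by (simp add: ex_def fps_to_fls_power[symmetric] fps_exp_power_mult)

lemma ex_m1_nz: assumes "r \<noteq> 0" shows "ex r - 1 \<noteq> 0"
proof -
  have "(fps_exp r - 1) $ 1 = r" by simp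
  then have "fps_exp r - 1 \<noteq> 0" using assms by auto
  then have "fps_to_fls (fps_exp r - 1) \<noteq> 0" by simp
  then show ?thesis by (simp add: ex_def)
qed

lemma ex_p1_nz: "ex r + 1 \<noteq> 0"
proof -
  have "(fps_exp r + 1) $ 0 = 2" by simp
  then have "fps_exp r + 1 \<noteq> 0" by (metis fps_zero_nth zero_neq_numeral)
  moreover have "fps_to_fls (fps_exp r + 1) = ex r + 1" by (simp add: ex_def)
  ultimately show ?thesis by (metis fps_to_fls_eq_0_iff)
qed

lemma frac_shift_div:
  fixes N k :: int and u :: real
  assumes "N > 0"
  shows "frac ((u + of_int k) / of_int N) * of_int N = frac u + of_int ((\<lfloor>u\<rfloor> + k) mod N)"
proof -
  have fl: "\<lfloor>(u + of_int k) / of_int N\<rfloor> = (\<lfloor>u\<rfloor> + k) div N"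
  proof -
    have "\<lfloor>(u + of_int k) / of_int N\<rfloor> = \<lfloor>u + of_int k\<rfloor> div N"
      using assms by (simp add: floor_divide_real_eq_div)
    then show ?thesis by simp
  qed
  have "of_int ((\<lfloor>u\<rfloor> + k) mod N) = (of_int (\<lfloor>u\<rfloor> + k) :: real) - of_int N * of_int ((\<lfloor>u\<rfloor> + k) div N)"
    by (metis minus_div_mult_eq_mod mult.commute of_int_diff of_int_mult)
  moreover have "((u + of_int k) / of_int N - of_int ((\<lfloor>u\<rfloor> + k) div N)) * of_int N
      = u + of_int k - of_int N * of_int ((\<lfloor>u\<rfloor> + k) div N)" using assms by (simp add: field_simps)
  ultimately show ?thesis by (simp add: frac_def fl)
qed

lemma bij_mod_sum:
  fixes N m :: int and h :: "int \<Rightarrow> 'a::comm_monoid_add"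
  assumes "N > 0"
  shows "(\<Sum>k\<in>{0..<N}. h ((m + k) mod N)) = (\<Sum>r\<in>{0..<N}. h r)"
proof -
  let ?f = "\<lambda>k. (m + k) mod N"
  have inj: "inj_on ?f {0..<N}"
  proof (rule inj_onI)
    fix k k' assume k: "k \<in> {0..<N}" and k': "k' \<in> {0..<N}" and e: "(m + k) mod N = (m + k') mod N"
    then have "N dvd (m + k) - (m + k')" by (simp add: mod_eq_dvd_iff)
    then have d: "N dvd k - k'" by simp
    show "k = k'"
    proof (rule ccontr)
      assume "k \<noteq> k'"
      then have "\<bar>N\<bar> \<le> \<bar>k - k'\<bar>" using dvd_imp_le_int d by simp
      then show False using k k' by auto
    qed
  qed
  have sub: "?f ` {0..<N} \<subseteq> {0..<N}" using assms by auto
  have "?f ` {0..<N} = {0..<N}" using inj sub by (simp add: endo_inj_surj)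
  then have "bij_betw ?f {0..<N} {0..<N}" using inj by (simp add: bij_betw_def)
  then show ?thesis by (rule sum.reindex_bij_betw)
qed

lemma int_range_sum:
  fixes N :: int and h :: "int \<Rightarrow> 'a::comm_monoid_add"
  shows "(\<Sum>r\<in>{0..<N}. h r) = (\<Sum>i<nat N. h (int i))"
proof -
  have "{0..<N} = int ` {..<nat N}"
    by (auto simp: image_iff intro!: bexI[where x="nat _"])
  moreover have "inj_on int {..<nat N}" by simp
  ultimately show ?thesis by (simp add: sum.reindex)
qed

lemma fld1: "(D::'a::field) \<noteq> 0 \<Longrightarrow> x * (D / E) / D = x / E"
  by simp

definition G :: "real \<Rightarrow> real \<Rightarrow> real fls" where
  "G u k = ex (frac u * k) / (ex k - 1)"

definition Eu :: "real \<Rightarrow> real \<Rightarrow> real fls" where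
  "Eu u k = fls_const ((-1) powi \<lfloor>u\<rfloor>) * 2 * ex (frac u * k) / (ex k + 1)"

lemma mult_G:
  fixes N :: int
  assumes "N > 0" "k \<noteq> 0"
  shows "(\<Sum>j\<in>{0..<N}. G ((w + of_int j) / of_int N) (of_int N * k)) = G w k"
proof -
  have Nk: "of_int N * k \<noteq> 0" using assms by simp
  have "(\<Sum>j\<in>{0..<N}. G ((w + of_int j) / of_int N) (of_int N * k))
      = (\<Sum>j\<in>{0..<N}. ex (frac w * k) * ex (of_int ((\<lfloor>w\<rfloor> + j) mod N) * k) / (ex (of_int N * k) - 1))"
  proof (rule sum.cong[OF refl])
    fix j assume "j \<in> {0..<N}"
    have "frac ((w + of_int j) / of_int N) * (of_int N * k) = frac w * k + of_int ((\<lfloor>w\<rfloor> + j) mod N) * k"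
      using frac_shift_div[OF assms(1), of w j] by (simp add: algebra_simps)
    then show "G ((w + of_int j) / of_int N) (of_int N * k) = ex (frac w * k) * ex (of_int ((\<lfloor>w\<rfloor> + j) mod N) * k) / (ex (of_int N * k) - 1)"
      by (simp add: G_def ex_add)
  qed
  also have "\<dots> = (\<Sum>r\<in>{0..<N}. ex (frac w * k) * ex (of_int r * k) / (ex (of_int N * k) - 1))"
    using bij_mod_sum[OF assms(1), of "\<lambda>r. ex (frac w * k) * ex (of_int r * k) / (ex (of_int N * k) - 1)"] by simp
  also have "\<dots> = (\<Sum>i<nat N. ex (frac w * k) * ex k ^ i / (ex (of_int N * k) - 1))"
    by (simp add: int_range_sum ex_power)
  also have "\<dots> = ex (frac w * k) * (\<Sum>i<nat N. ex k ^ i) / (ex (of_int N * k) - 1)"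
    by (simp add: sum_distrib_left sum_divide_distrib)
  also have "(\<Sum>i<nat N. ex k ^ i) = (ex (of_int N * k) - 1) / (ex k - 1)"
  proof -
    have "ex k \<noteq> 1" using ex_m1_nz[OF assms(2)] by simp
    then have "(\<Sum>i<nat N. ex k ^ i) = (ex k ^ nat N - 1) / (ex k - 1)" by (rule geometric_sum)
    also have "ex k ^ nat N = ex (of_int N * k)" using assms(1) by (simp add: ex_power)
    finally show ?thesis .
  qed
  also have "ex (frac w * k) * ((ex (of_int N * k) - 1) / (ex k - 1)) / (ex (of_int N * k) - 1) = G w k"
    using ex_m1_nz[OF Nk] unfolding G_def by (rule fld1)
  finally show ?thesis .
qed


lemma bij_mod_sum_minus:
  fixes N m :: int and h :: "int \<Rightarrow> 'a::comm_monoid_add"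
  assumes "N > 0"
  shows "(\<Sum>k\<in>{0..<N}. h ((m - k) mod N)) = (\<Sum>r\<in>{0..<N}. h r)"
proof -
  let ?f = "\<lambda>k. (m - k) mod N"
  have inj: "inj_on ?f {0..<N}"
  proof (rule inj_onI)
    fix k k' assume k: "k \<in> {0..<N}" and k': "k' \<in> {0..<N}" and e: "(m - k) mod N = (m - k') mod N"
    then have "N dvd (m - k) - (m - k')" by (simp add: mod_eq_dvd_iff)
    then have d: "N dvd k' - k" by simp
    show "k = k'"
    proof (rule ccontr)
      assume "k \<noteq> k'"
      then have "\<bar>N\<bar> \<le> \<bar>k' - k\<bar>" using dvd_imp_le_int d by simp
      then show False using k k' by auto
    qed
  qed
  have sub: "?f ` {0..<N} \<subseteq> {0..<N}" using assms by auto
  have "?f ` {0..<N} = {0..<N}" using inj sub by (simp add: endo_inj_surj)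
  then have "bij_betw ?f {0..<N} {0..<N}" using inj by (simp add: bij_betw_def)
  then show ?thesis by (rule sum.reindex_bij_betw)
qed

lemma mult_G_minus:
  fixes N :: int
  assumes "N > 0" "k \<noteq> 0"
  shows "(\<Sum>j\<in>{0..<N}. G ((w - of_int j) / of_int N) (of_int N * k)) = G w k"
proof -
  have Nk: "of_int N * k \<noteq> 0" using assms by simp
  have "(\<Sum>j\<in>{0..<N}. G ((w - of_int j) / of_int N) (of_int N * k))
      = (\<Sum>j\<in>{0..<N}. ex (frac w * k) * ex (of_int ((\<lfloor>w\<rfloor> - j) mod N) * k) / (ex (of_int N * k) - 1))"
  proof (rule sum.cong[OF refl])
    fix j assume "j \<in> {0..<N}"
    have "frac ((w + of_int (-j)) / of_int N) * (of_int N * k) = frac w * k + of_int ((\<lfloor>w\<rfloor> + (-j)) mod N) * k"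
      using frac_shift_div[OF assms(1), of w "-j"] by (simp add: algebra_simps)
    then show "G ((w - of_int j) / of_int N) (of_int N * k) = ex (frac w * k) * ex (of_int ((\<lfloor>w\<rfloor> - j) mod N) * k) / (ex (of_int N * k) - 1)"
      by (simp add: G_def ex_add)
  qed
  also have "\<dots> = (\<Sum>r\<in>{0..<N}. ex (frac w * k) * ex (of_int r * k) / (ex (of_int N * k) - 1))"
    using bij_mod_sum_minus[OF assms(1), of "\<lambda>r. ex (frac w * k) * ex (of_int r * k) / (ex (of_int N * k) - 1)"] by simp
  also have "\<dots> = (\<Sum>i<nat N. ex (frac w * k) * ex k ^ i / (ex (of_int N * k) - 1))"
    by (simp add: int_range_sum ex_power)
  also have "\<dots> = ex (frac w * k) * (\<Sum>i<nat N. ex k ^ i) / (ex (of_int N * k) - 1)"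
    by (simp add: sum_distrib_left sum_divide_distrib)
  also have "(\<Sum>i<nat N. ex k ^ i) = (ex (of_int N * k) - 1) / (ex k - 1)"
  proof -
    have "ex k \<noteq> 1" using ex_m1_nz[OF assms(2)] by simp
    then have "(\<Sum>i<nat N. ex k ^ i) = (ex k ^ nat N - 1) / (ex k - 1)" by (rule geometric_sum)
    also have "ex k ^ nat N = ex (of_int N * k)" using assms(1) by (simp add: ex_power)
    finally show ?thesis .
  qed
  also have "ex (frac w * k) * ((ex (of_int N * k) - 1) / (ex k - 1)) / (ex (of_int N * k) - 1) = G w k"
    using ex_m1_nz[OF Nk] unfolding G_def by (rule fld1)
  finally show ?thesis .
qed

lemma fls_sign: "fls_const ((-1::real) powi k) = (if even k then 1 else -1)"
  by (simp add: powi_m1)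

lemma fld2: "(D::'a::field_char_0) \<noteq> 0 \<Longrightarrow> E + 1 \<noteq> 0 \<Longrightarrow> s * x / D * (D / (- E - 1)) = - (s * 2 * x / (E + 1)) / 2"
proof -
  assume a: "D \<noteq> 0" "E + 1 \<noteq> 0"
  have g: "F \<noteq> 0 \<Longrightarrow> s * x / D * (D / (- F)) = - (s * 2 * x / F) / 2" for F
    using a by (simp add: field_simps)
  have "- E - 1 = - (E + 1)" by simp
  then show ?thesis using g[OF a(2)] by simp
qed

lemma alt_G:
  fixes c :: int
  assumes "c > 0" "even c" "k \<noteq> 0"
  shows "(\<Sum>\<mu>\<in>{0..<c}. fls_const ((-1) powi \<mu>) * G ((of_int \<mu> + w) / of_int c) (of_int c * k)) = - Eu w k / 2"
proof -
  define sg :: "int \<Rightarrow> real fls" where "sg j = (if even j then 1 else -1)" for j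
  have ck: "of_int c * k \<noteq> 0" using assms by simp
  let ?C = "sg \<lfloor>w\<rfloor> * ex (frac w * k) / (ex (of_int c * k) - 1)"
  have "(\<Sum>\<mu>\<in>{0..<c}. fls_const ((-1) powi \<mu>) * G ((of_int \<mu> + w) / of_int c) (of_int c * k))
      = (\<Sum>\<mu>\<in>{0..<c}. ?C * (sg ((\<lfloor>w\<rfloor> + \<mu>) mod c) * ex (of_int ((\<lfloor>w\<rfloor> + \<mu>) mod c) * k)))"
  proof (rule sum.cong[OF refl])
    fix \<mu> assume "\<mu> \<in> {0..<c}"
    have "frac ((w + of_int \<mu>) / of_int c) * (of_int c * k) = frac w * k + of_int ((\<lfloor>w\<rfloor> + \<mu>) mod c) * k"
      using frac_shift_div[OF assms(1), of w \<mu>] by (simp add: algebra_simps)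
    then have g: "G ((of_int \<mu> + w) / of_int c) (of_int c * k) = ex (frac w * k) * ex (of_int ((\<lfloor>w\<rfloor> + \<mu>) mod c) * k) / (ex (of_int c * k) - 1)"
      by (simp add: G_def ex_add add.commute)
    have dm: "\<lfloor>w\<rfloor> + \<mu> = c * ((\<lfloor>w\<rfloor> + \<mu>) div c) + (\<lfloor>w\<rfloor> + \<mu>) mod c" by simp
    have "even (c * ((\<lfloor>w\<rfloor> + \<mu>) div c))" using assms(2) by simp
    then have par: "even (\<lfloor>w\<rfloor> + \<mu>) \<longleftrightarrow> even ((\<lfloor>w\<rfloor> + \<mu>) mod c)"
      by (metis dm even_add)
    have "fls_const ((-1) powi \<mu>) = sg \<lfloor>w\<rfloor> * sg ((\<lfloor>w\<rfloor> + \<mu>) mod c)"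
      unfolding fls_sign sg_def using par by auto
    then show "fls_const ((-1) powi \<mu>) * G ((of_int \<mu> + w) / of_int c) (of_int c * k) = ?C * (sg ((\<lfloor>w\<rfloor> + \<mu>) mod c) * ex (of_int ((\<lfloor>w\<rfloor> + \<mu>) mod c) * k))"
      unfolding g by (simp add: field_simps)
  qed
  also have "\<dots> = ?C * (\<Sum>\<mu>\<in>{0..<c}. sg ((\<lfloor>w\<rfloor> + \<mu>) mod c) * ex (of_int ((\<lfloor>w\<rfloor> + \<mu>) mod c) * k))"
    by (simp add: sum_distrib_left)
  also have "(\<Sum>\<mu>\<in>{0..<c}. sg ((\<lfloor>w\<rfloor> + \<mu>) mod c) * ex (of_int ((\<lfloor>w\<rfloor> + \<mu>) mod c) * k))
      = (\<Sum>r\<in>{0..<c}. sg r * ex (of_int r * k))"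
    by (rule bij_mod_sum[OF assms(1), of "\<lambda>r. sg r * ex (of_int r * k)"])
  also have "\<dots> = (\<Sum>i<nat c. (- ex k) ^ i)"
    by (simp add: int_range_sum ex_power sg_def power_minus' minus_one_power_iff)
  also have "\<dots> = ((- ex k) ^ nat c - 1) / (- ex k - 1)"
  proof (rule geometric_sum)
    show "- ex k \<noteq> 1" using ex_p1_nz[of k] by (metis add.inverse_inverse eq_neg_iff_add_eq_0)
  qed
  also have "(- ex k) ^ nat c = ex (of_int c * k)"
    using assms by (simp add: ex_power power_minus' even_nat_iff)
  also have "?C * ((ex (of_int c * k) - 1) / (- ex k - 1)) = - Eu w k / 2"
    unfolding Eu_def fls_sign sg_def[symmetric] by (rule fld2[OF ex_m1_nz[OF ck] ex_p1_nz])
  finally show ?thesis .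
qed

lemma frac_diff: "frac (s - t) = (if frac t \<le> frac s then frac s - frac t else frac s - frac t + 1)"
proof -
  have s: "s = of_int \<lfloor>s\<rfloor> + frac s" and t: "t = of_int \<lfloor>t\<rfloor> + frac t" by (simp_all add: frac_def)
  have b: "0 \<le> frac s" "frac s < 1" "0 \<le> frac t" "frac t < 1" by (simp_all add: frac_lt_1)
  show ?thesis
  proof (cases "frac t \<le> frac s")
    case True
    have "\<lfloor>s - t\<rfloor> = \<lfloor>s\<rfloor> - \<lfloor>t\<rfloor>" using True b s t by (simp add: floor_eq_iff; linarith)
    then show ?thesis using True by (simp add: frac_def)
  next
    case False
    have "\<lfloor>s - t\<rfloor> = \<lfloor>s\<rfloor> - \<lfloor>t\<rfloor> - 1" using False b s t by (simp add: floor_eq_iff; linarith)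
    then show ?thesis using False by (simp add: frac_def)
  qed
qed

lemma fld_core:
  fixes a1 a2 b1 b2 Q D1 D2 D3 W V :: "'a::field"
  assumes nz: "a2 \<noteq> 0" "b1 \<noteq> 0" "Q \<noteq> 0" "D1 \<noteq> 0" "D2 \<noteq> 0" "D3 \<noteq> 0"
    and W: "W = - D3 / Q" and D2: "D3 + Q * D1 = D2"
  shows "a1/D1 * (b2/D3) = (a1/a2)/D1 * (a2*b2/D2) - (b2/b1)/W * (a1*b1/D2)"
proof -
  have e1: "(a1/a2)/D1 * (a2*b2/D2) = a1*b2/(D1*D2)" using nz by (simp add: field_simps)
  have e2: "(b2/b1)/W * (a1*b1/D2) = - (a1*b2*Q)/(D3*D2)" unfolding W using nz by (simp add: field_simps)
  have e3: "a1*b2/(D1*D2) + (a1*b2*Q)/(D3*D2) = a1*b2*(D3 + Q*D1)/(D1*D3*D2)" using nz by (simp add: field_simps)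
  have e4: "a1*b2*(D3 + Q*D1)/(D1*D3*D2) = a1/D1 * (b2/D3)" unfolding D2 using nz by (simp add: field_simps)
  show ?thesis unfolding e1 e2 using e3 e4 by simp
qed

lemma fld_case1:
  fixes a1 a2 b1 b2 P Q :: "'a::field"
  assumes "a2 \<noteq> 0" "b1 \<noteq> 0" "Q \<noteq> 0" "P \<noteq> 1" "Q \<noteq> 1" "P * Q \<noteq> 1"
  shows "a1/(P-1) * (b2/(Q-1)) = (a1/a2)/(P-1) * (a2*b2/(P*Q-1)) - (b2/b1)/(1/Q-1) * (a1*b1/(P*Q-1))"
  by (rule fld_core) (use assms in \<open>auto simp: field_simps\<close>)

lemma fld_core2:
  fixes a1 a2 b1 b2 P Q D1 D2 D3 W :: "'a::field"
  assumes nz: "a2 \<noteq> 0" "b1 \<noteq> 0" "Q \<noteq> 0" "D1 \<noteq> 0" "D2 \<noteq> 0" "D3 \<noteq> 0"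
    and W: "W = - D3 / Q" and D2: "P * D3 + D1 = D2"
  shows "a1/D1 * (b2/D3) = (a1*P/a2)/D1 * (a2*b2/D2) - (b2/(b1*Q))/W * (a1*b1/D2)"
proof -
  have e1: "(a1*P/a2)/D1 * (a2*b2/D2) = a1*b2*P/(D1*D2)" using nz by (simp add: field_simps)
  have e2: "(b2/(b1*Q))/W * (a1*b1/D2) = - (a1*b2)/(D3*D2)" unfolding W using nz by (simp add: field_simps)
  have e3: "a1*b2*P/(D1*D2) + (a1*b2)/(D3*D2) = a1*b2*(P * D3 + D1)/(D1*D3*D2)" using nz by (simp add: field_simps)
  have e4: "a1*b2*(P * D3 + D1)/(D1*D3*D2) = a1/D1 * (b2/D3)" unfolding D2 using nz by (simp add: field_simps)
  show ?thesis unfolding e1 e2 using e3 e4 by simp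
qed

lemma fld_case2:
  fixes a1 a2 b1 b2 P Q :: "'a::field"
  assumes "a2 \<noteq> 0" "b1 \<noteq> 0" "Q \<noteq> 0" "P \<noteq> 1" "Q \<noteq> 1" "P * Q \<noteq> 1"
  shows "a1/(P-1) * (b2/(Q-1)) = (a1*P/a2)/(P-1) * (a2*b2/(P*Q-1)) - (b2/(b1*Q))/(1/Q-1) * (a1*b1/(P*Q-1))"
  by (rule fld_core2) (use assms in \<open>auto simp: field_simps\<close>)


lemma G3:
  assumes "A \<noteq> 0" "B \<noteq> 0" "A + B \<noteq> 0"
  shows "G s A * G t B = G (s - t) A * G t (A + B) - G (s - t) (- B) * G s (A + B)"
proof -
  define fs where "fs = frac s"
  define ft where "ft = frac t"
  have P1: "ex A \<noteq> 1" using ex_m1_nz[OF assms(1)] by simp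
  have Q1: "ex B \<noteq> 1" using ex_m1_nz[OF assms(2)] by simp
  have PQ1: "ex A * ex B \<noteq> 1" using ex_m1_nz[OF assms(3)] by (simp add: ex_add)
  have eAB: "ex (A + B) = ex A * ex B" by (rule ex_add)
  have emB: "ex (- B) = 1 / ex B" using ex_diff[of 0 B] by simp
  have et: "ex (ft * (A + B)) = ex (ft * A) * ex (ft * B)" by (simp add: ex_add[symmetric] algebra_simps)
  have es: "ex (fs * (A + B)) = ex (fs * A) * ex (fs * B)" by (simp add: ex_add[symmetric] algebra_simps)
  show ?thesis
  proof (cases "ft \<le> fs")
    case True
    then have d: "frac (s - t) = fs - ft" by (simp add: frac_diff fs_def ft_def)
    have e1: "ex ((fs - ft) * A) = ex (fs * A) / ex (ft * A)" by (simp add: ex_diff[symmetric] algebra_simps)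
    have e2: "ex ((fs - ft) * (- B)) = ex (ft * B) / ex (fs * B)" by (simp add: ex_diff[symmetric] algebra_simps)
    show ?thesis unfolding G_def d fs_def[symmetric] ft_def[symmetric] e1 e2 eAB emB et es
      by (rule fld_case1) (simp_all add: P1 Q1 PQ1)
  next
    case False
    then have d: "frac (s - t) = fs - ft + 1" by (simp add: frac_diff fs_def ft_def)
    have e1: "ex ((fs - ft + 1) * A) = ex (fs * A) * ex A / ex (ft * A)" by (simp add: ex_diff[symmetric] ex_add[symmetric] algebra_simps)
    have e2: "ex ((fs - ft + 1) * (- B)) = ex (ft * B) / (ex (fs * B) * ex B)" by (simp add: ex_diff[symmetric] ex_add[symmetric] algebra_simps)
    show ?thesis unfolding G_def d fs_def[symmetric] ft_def[symmetric] e1 e2 eAB emB et es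
      by (rule fld_case2) (simp_all add: P1 Q1 PQ1)
  qed
qed


lemma mult_G':
  fixes N :: int
  assumes "N > 0" "K \<noteq> 0"
  shows "G w (K / of_int N) = (\<Sum>j\<in>{0..<N}. G ((w + of_int j) / of_int N) K)"
proof -
  have "K / of_int N \<noteq> 0" using assms by simp
  from mult_G[OF assms(1) this, of w] show ?thesis using assms(1) by simp
qed

lemma mult_G_minus':
  fixes N :: int
  assumes "N > 0" "K \<noteq> 0"
  shows "G w (K / of_int N) = (\<Sum>j\<in>{0..<N}. G ((w - of_int j) / of_int N) K)"
proof -
  have "K / of_int N \<noteq> 0" using assms by simp
  from mult_G_minus[OF assms(1) this, of w] show ?thesis using assms(1) by simp
qed

lemma main_fls:
  fixes a b c :: int and x y z A B :: real
  assumes ab: "a > 0" "b > 0" and cc: "c > 0" "even c" and AB: "A \<noteq> 0" "B \<noteq> 0" "A + B \<noteq> 0"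
  shows "(\<Sum>\<mu>\<in>{0..<c}. fls_const ((-1) powi \<mu>) * G (of_int a * (of_int \<mu> + z) / of_int c + x) (A / of_int a)
              * G (of_int b * (of_int \<mu> + z) / of_int c + y) (B / of_int b))
    = - (\<Sum>l\<in>{0..<b}. G (x - of_int a * (of_int l + y) / of_int b) (A / of_int a)
              * Eu (z + of_int c * (of_int l + y) / of_int b) ((A + B) / of_int c)) / 2
      + (\<Sum>k\<in>{0..<a}. G (of_int b * (of_int k + x) / of_int a - y) (- B / of_int b)
              * Eu (z + of_int c * (of_int k + x) / of_int a) ((A + B) / of_int c)) / 2"
proof -
  define sg :: "int \<Rightarrow> real fls" where "sg m = fls_const ((-1) powi m)" for m
  define w1 where "w1 l = z + of_int c * (of_int l + y) / of_int b" for l :: int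
  define w2 where "w2 k = z + of_int c * (of_int k + x) / of_int a" for k :: int
  define s where "s m k = (of_int m + w2 k) / of_int c" for m k :: int
  define t where "t m l = (of_int m + w1 l) / of_int c" for m l :: int
  define d where "d k l = (of_int k + x) / of_int a - (of_int l + y) / of_int b" for k l :: int
  define C where "C = (A + B) / of_int c"
  have anz: "real_of_int a \<noteq> 0" and bnz: "real_of_int b \<noteq> 0" and cnz: "real_of_int c \<noteq> 0" using ab cc by auto
  have hs: "(of_int a * (of_int m + z) / of_int c + x + of_int k) / of_int a = s m k" for m k
    unfolding s_def w2_def using anz cnz by (simp add: field_simps)
  have ht: "(of_int b * (of_int m + z) / of_int c + y + of_int l) / of_int b = t m l" for m l
    unfolding t_def w1_def using bnz cnz by (simp add: field_simps)
  have hd: "s m k - t m l = d k l" for m k l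
    unfolding s_def t_def d_def w1_def w2_def using anz bnz cnz by (simp add: field_simps)
  have cC: "of_int c * C = A + B" unfolding C_def using cnz by simp
  have "(\<Sum>\<mu>\<in>{0..<c}. fls_const ((-1) powi \<mu>) * G (of_int a * (of_int \<mu> + z) / of_int c + x) (A / of_int a)
              * G (of_int b * (of_int \<mu> + z) / of_int c + y) (B / of_int b))
      = (\<Sum>\<mu>\<in>{0..<c}. sg \<mu> * ((\<Sum>k\<in>{0..<a}. G (s \<mu> k) A) * (\<Sum>l\<in>{0..<b}. G (t \<mu> l) B)))"
    unfolding sg_def mult_G'[OF ab(1) AB(1)] mult_G'[OF ab(2) AB(2)] hs ht by (simp add: mult.assoc)
  also have "\<dots> = (\<Sum>\<mu>\<in>{0..<c}. \<Sum>k\<in>{0..<a}. \<Sum>l\<in>{0..<b}. sg \<mu> * (G (s \<mu> k) A * G (t \<mu> l) B))"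
    by (rule sum.cong[OF refl], subst sum_product, simp add: sum_distrib_left)
  also have "\<dots> = (\<Sum>\<mu>\<in>{0..<c}. \<Sum>k\<in>{0..<a}. \<Sum>l\<in>{0..<b}.
        G (d k l) A * (sg \<mu> * G (t \<mu> l) (A + B)) - G (d k l) (- B) * (sg \<mu> * G (s \<mu> k) (A + B)))"
    by (simp add: G3[OF AB] hd algebra_simps)
  also have "\<dots> = (\<Sum>k\<in>{0..<a}. \<Sum>l\<in>{0..<b}. \<Sum>\<mu>\<in>{0..<c}.
        G (d k l) A * (sg \<mu> * G (t \<mu> l) (A + B)) - G (d k l) (- B) * (sg \<mu> * G (s \<mu> k) (A + B)))"
    by (subst sum.swap) (simp add: sum.swap[of _ "{0..<c}"])
  also have "\<dots> = (\<Sum>k\<in>{0..<a}. \<Sum>l\<in>{0..<b}.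
        G (d k l) A * (- Eu (w1 l) C / 2) - G (d k l) (- B) * (- Eu (w2 k) C / 2))"
  proof -
    have at: "(\<Sum>\<mu>\<in>{0..<c}. sg \<mu> * G (t \<mu> l) (A + B)) = - Eu (w1 l) C / 2" for l
      unfolding sg_def t_def cC[symmetric] by (rule alt_G[OF cc]) (use AB cnz C_def in auto)
    have as: "(\<Sum>\<mu>\<in>{0..<c}. sg \<mu> * G (s \<mu> k) (A + B)) = - Eu (w2 k) C / 2" for k
      unfolding sg_def s_def cC[symmetric] by (rule alt_G[OF cc]) (use AB cnz C_def in auto)
    show ?thesis by (simp add: sum_subtractf sum_distrib_left[symmetric] at as)
  qed
  also have "\<dots> = - (\<Sum>l\<in>{0..<b}. (\<Sum>k\<in>{0..<a}. G (d k l) A) * Eu (w1 l) C) / 2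
      + (\<Sum>k\<in>{0..<a}. (\<Sum>l\<in>{0..<b}. G (d k l) (- B)) * Eu (w2 k) C) / 2"
    by (simp add: sum_subtractf sum_distrib_right sum_divide_distrib sum.swap[of _ "{0..<a}"] sum_negf)
  also have "(\<lambda>l. \<Sum>k\<in>{0..<a}. G (d k l) A) = (\<lambda>l. G (x - of_int a * (of_int l + y) / of_int b) (A / of_int a))"
  proof
    fix l
    have "G (x - of_int a * (of_int l + y) / of_int b) (A / of_int a)
        = (\<Sum>k\<in>{0..<a}. G ((x - of_int a * (of_int l + y) / of_int b + of_int k) / of_int a) A)"
      by (rule mult_G'[OF ab(1) AB(1)])
    also have "\<dots> = (\<Sum>k\<in>{0..<a}. G (d k l) A)"
      by (rule sum.cong[OF refl]) (simp add: d_def anz bnz field_simps)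
    finally show "(\<Sum>k\<in>{0..<a}. G (d k l) A) = G (x - of_int a * (of_int l + y) / of_int b) (A / of_int a)" by simp
  qed
  also have "(\<lambda>k. \<Sum>l\<in>{0..<b}. G (d k l) (- B)) = (\<lambda>k. G (of_int b * (of_int k + x) / of_int a - y) (- B / of_int b))"
  proof
    fix k
    have "- B \<noteq> 0" using AB by simp
    have "G (of_int b * (of_int k + x) / of_int a - y) (- B / of_int b)
        = (\<Sum>l\<in>{0..<b}. G ((of_int b * (of_int k + x) / of_int a - y - of_int l) / of_int b) (- B))"
      by (rule mult_G_minus'[OF ab(2) \<open>- B \<noteq> 0\<close>])
    also have "\<dots> = (\<Sum>l\<in>{0..<b}. G (d k l) (- B))"
      by (rule sum.cong[OF refl]) (simp add: d_def anz bnz field_simps)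
    finally show "(\<Sum>l\<in>{0..<b}. G (d k l) (- B)) = G (of_int b * (of_int k + x) / of_int a - y) (- B / of_int b)" by simp
  qed
  finally show ?thesis unfolding w1_def w2_def C_def .
qed


definition Bs :: "real \<Rightarrow> real \<Rightarrow> real fps" where
  "Bs u k = Abs_fps (\<lambda>n. bernfun n u * k ^ n / fact n)"

definition Es :: "real \<Rightarrow> real \<Rightarrow> real fps" where
  "Es u k = Abs_fps (\<lambda>n. eulerfun n u * k ^ n / fact n)"

lemma Bs_fls:
  assumes "k \<noteq> 0"
  shows "fps_to_fls (Bs u k) = fls_const k * fls_X * G u k"
proof -
  define f where "f = frac u"
  define Bx :: "real fps" where "Bx = (fps_X * fps_exp f) / (fps_exp 1 - 1)"
  define L :: "real fps" where "L = fps_const k * fps_X"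
  have L0: "L $ 0 = 0" by (simp add: L_def)
  have g0: "fps_exp (1::real) - 1 \<noteq> 0"
  proof
    assume "fps_exp (1::real) - 1 = 0"
    then have "(fps_exp (1::real) - 1) $ 1 = 0" by simp
    then show False by simp
  qed
  have sd: "subdegree (fps_exp (1::real) - 1) \<le> subdegree (fps_X * fps_exp f)"
  proof -
    have "subdegree (fps_exp (1::real) - 1) \<le> 1" by (rule subdegree_leI) simp
    moreover have "fps_exp f \<noteq> 0" by (metis fps_exp_nth fps_zero_nth div_by_1 fact_0 of_nat_1 power_0 zero_neq_one)
    then have "subdegree (fps_X * fps_exp f) = 1 + subdegree (fps_exp f)" by simp
    ultimately show ?thesis by simp
  qed
  have BxE: "Bx * (fps_exp 1 - 1) = fps_X * fps_exp f"
    unfolding Bx_def by (rule fps_times_divide_eq[OF g0 sd])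
  have Bs_eq: "Bs u k = Bx oo L"
    unfolding Bs_def L_def fps_compose_linear
    by (simp add: fps_eq_iff bernfun_def bernpoly_def Bx_def f_def frac_def)
  have "(Bx oo L) * ((fps_exp 1 - 1) oo L) = (fps_X * fps_exp f) oo L"
    using BxE fps_compose_mult_distrib[OF L0] by metis
  then have e: "Bs u k * (fps_exp k - 1) = L * fps_exp (k * f)"
    unfolding Bs_eq fps_compose_mult_distrib[OF L0] fps_compose_sub_distrib
    by (simp add: L_def fps_X_fps_compose_startby0 L0[unfolded L_def])
  have "fps_to_fls (Bs u k) * (ex k - 1) = fls_const k * fls_X * ex (k * f)"
  proof -
    have "fps_to_fls (Bs u k) * (ex k - 1) = fps_to_fls (Bs u k * (fps_exp k - 1))"
      by (simp add: ex_def fls_times_fps_to_fls)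
    also have "\<dots> = fps_to_fls (fps_const k * fps_X * fps_exp (k * f))" using e by (simp add: L_def)
    also have "\<dots> = fls_const k * fls_X * ex (k * f)" by (simp add: ex_def fls_times_fps_to_fls)
    finally show ?thesis .
  qed
  then show ?thesis using ex_m1_nz[OF assms] unfolding G_def f_def
    by (simp add: field_simps mult.commute)
qed

lemma Es_fls:
  shows "fps_to_fls (Es u k) = Eu u k"
proof -
  define f where "f = frac u"
  define sg where "sg = ((-1::real) powi \<lfloor>u\<rfloor>)"
  define Ex :: "real fps" where "Ex = (2 * fps_exp f) / (fps_exp 1 + 1)"
  define L :: "real fps" where "L = fps_const k * fps_X"
  have L0: "L $ 0 = 0" by (simp add: L_def)
  have g0: "fps_exp (1::real) + 1 \<noteq> 0"
  proof
    assume "fps_exp (1::real) + 1 = 0"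
    then have "(fps_exp (1::real) + 1) $ 0 = 0" by simp
    then show False by simp
  qed
  have sd: "subdegree (fps_exp (1::real) + 1) \<le> subdegree (2 * fps_exp f)"
  proof -
    have "subdegree (fps_exp (1::real) + 1) \<le> 0" by (rule subdegree_leI) simp
    then show ?thesis by simp
  qed
  have ExE: "Ex * (fps_exp 1 + 1) = 2 * fps_exp f"
    unfolding Ex_def by (rule fps_times_divide_eq[OF g0 sd])
  have Es_eq: "Es u k = fps_const sg * (Ex oo L)"
    unfolding Es_def L_def fps_compose_linear
    by (simp add: fps_eq_iff eulerfun_def eulerpoly_def Ex_def f_def frac_def sg_def)
  have "(Ex oo L) * ((fps_exp 1 + 1) oo L) = (2 * fps_exp f) oo L"
    using ExE fps_compose_mult_distrib[OF L0] by metis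
  then have e: "(Ex oo L) * (fps_exp k + 1) = 2 * fps_exp (k * f)"
    unfolding fps_compose_mult_distrib[OF L0] fps_compose_add_distrib
    by (simp add: L_def)
  have "fps_to_fls (Ex oo L) * (ex k + 1) = 2 * ex (k * f)"
  proof -
    have "fps_to_fls (Ex oo L) * (ex k + 1) = fps_to_fls ((Ex oo L) * (fps_exp k + 1))"
      by (simp add: ex_def fls_times_fps_to_fls)
    also have "\<dots> = fps_to_fls (2 * fps_exp (k * f))" using e by simp
    also have "\<dots> = 2 * ex (k * f)" by (simp add: ex_def fls_times_fps_to_fls)
    finally show ?thesis .
  qed
  then have "fps_to_fls (Ex oo L) = 2 * ex (k * f) / (ex k + 1)"
    using ex_p1_nz[of k] by (simp add: field_simps)
  moreover have "fps_to_fls (Es u k) = fls_const sg * fps_to_fls (Ex oo L)"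
    unfolding Es_eq fls_times_fps_to_fls by simp
  ultimately show ?thesis unfolding Eu_def sg_def f_def by (simp add: mult.commute mult.assoc)
qed


lemma fps_to_fls_sum: "fps_to_fls (\<Sum>x\<in>S. f x) = (\<Sum>x\<in>S. fps_to_fls (f x))"
  by (induction S rule: infinite_finite_induct) simp_all

lemma main_fps:
  fixes a b c :: int and x y z A B :: real
  assumes ab: "a > 0" "b > 0" and cc: "c > 0" "even c" and AB: "A \<noteq> 0" "B \<noteq> 0" "A + B \<noteq> 0"
  shows "(\<Sum>\<mu>\<in>{0..<c}. fps_const ((-1) powi \<mu> * of_int a * of_int b) * Bs (of_int a * (of_int \<mu> + z) / of_int c + x) (A / of_int a)
              * Bs (of_int b * (of_int \<mu> + z) / of_int c + y) (B / of_int b))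
    = - (fps_const (of_int a * B / 2) * fps_X * (\<Sum>l\<in>{0..<b}. Bs (x - of_int a * (of_int l + y) / of_int b) (A / of_int a)
              * Es (z + of_int c * (of_int l + y) / of_int b) ((A + B) / of_int c)))
      - fps_const (of_int b * A / 2) * fps_X * (\<Sum>k\<in>{0..<a}. Bs (of_int b * (of_int k + x) / of_int a - y) (- B / of_int b)
              * Es (z + of_int c * (of_int k + x) / of_int a) ((A + B) / of_int c))"
proof -
  have anz: "real_of_int a \<noteq> 0" and bnz: "real_of_int b \<noteq> 0" and cnz: "real_of_int c \<noteq> 0" using ab cc by auto
  have k1: "A / of_int a \<noteq> 0" and k2: "B / of_int b \<noteq> 0" and k2': "- B / of_int b \<noteq> 0" and k2'': "- (B / of_int b) \<noteq> 0" using AB anz bnz by auto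
  define M where "M = fls_const (A * B) * fls_X * fls_X"
  have cA: "fls_const (of_int a) * fls_const (A / of_int a) = fls_const A"
    using anz by simp
  have cB: "fls_const (of_int b) * fls_const (B / of_int b) = fls_const B"
    using bnz by simp
  have cB': "fls_const (of_int b) * fls_const (- B / of_int b) = - fls_const B"
    using bnz by simp
  have L: "fps_to_fls (fps_const ((-1) powi \<mu> * of_int a * of_int b) * Bs u (A / of_int a) * Bs v (B / of_int b))
      = M * (fls_const ((-1) powi \<mu>) * G u (A / of_int a) * G v (B / of_int b))" for \<mu> :: int and u v
  proof -
    have "fps_to_fls (fps_const ((-1) powi \<mu> * of_int a * of_int b) * Bs u (A / of_int a) * Bs v (B / of_int b))
        = fls_const ((-1) powi \<mu>) * (fls_const (of_int a) * fls_const (A / of_int a)) * (fls_const (of_int b) * fls_const (B / of_int b))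
          * fls_X * fls_X * G u (A / of_int a) * G v (B / of_int b)"
      by (simp add: fls_times_fps_to_fls Bs_fls[OF k1] Bs_fls[OF k2] mult_ac)
    also have "\<dots> = M * (fls_const ((-1) powi \<mu>) * G u (A / of_int a) * G v (B / of_int b))"
      unfolding cA cB M_def by (simp add: mult_ac)
    finally show ?thesis .
  qed
  have h2: "(2::real fls) * fls_const (r / 2) = fls_const r" for r
  proof -
    have "fls_const 2 * fls_const (r / 2) = fls_const r" by (simp only: fls_const_mult_const) simp
    then show ?thesis by simp
  qed
  have R1: "fps_to_fls (fps_const (of_int a * B / 2) * fps_X * (Bs u (A / of_int a) * Es w C))
      = M * (G u (A / of_int a) * Eu w C / 2)" for u w C
  proof -
    have "fps_to_fls (fps_const (of_int a * B / 2) * fps_X * (Bs u (A / of_int a) * Es w C))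
        = fls_const (B / 2) * (fls_const (of_int a) * fls_const (A / of_int a)) * fls_X * fls_X * G u (A / of_int a) * Eu w C"
      by (simp add: fls_times_fps_to_fls Bs_fls[OF k1] Es_fls mult_ac)
    also have "\<dots> = M * (G u (A / of_int a) * Eu w C / 2)"
      unfolding cA M_def by (simp add: mult_ac h2 flip: fls_const_mult_const)
    finally show ?thesis .
  qed
  have R2: "fps_to_fls (fps_const (of_int b * A / 2) * fps_X * (Bs u (- B / of_int b) * Es w C))
      = - (M * (G u (- B / of_int b) * Eu w C / 2))" for u w C
  proof -
    have "fps_to_fls (fps_const (of_int b * A / 2) * fps_X * (Bs u (- B / of_int b) * Es w C))
        = fls_const (A / 2) * (fls_const (of_int b) * fls_const (- B / of_int b)) * fls_X * fls_X * G u (- B / of_int b) * Eu w C"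
      by (simp add: fls_times_fps_to_fls Bs_fls[OF k2'] Bs_fls[OF k2''] Es_fls mult_ac)
    also have "\<dots> = - (M * (G u (- B / of_int b) * Eu w C / 2))"
      unfolding cB' M_def by (simp add: mult_ac h2 flip: fls_const_mult_const)
    finally show ?thesis .
  qed
  let ?mL = "\<Sum>\<mu>\<in>{0..<c}. fls_const ((-1) powi \<mu>) * G (of_int a * (of_int \<mu> + z) / of_int c + x) (A / of_int a)
              * G (of_int b * (of_int \<mu> + z) / of_int c + y) (B / of_int b)"
  let ?S1 = "\<Sum>l\<in>{0..<b}. G (x - of_int a * (of_int l + y) / of_int b) (A / of_int a)
              * Eu (z + of_int c * (of_int l + y) / of_int b) ((A + B) / of_int c)"
  let ?S2 = "\<Sum>k\<in>{0..<a}. G (of_int b * (of_int k + x) / of_int a - y) (- B / of_int b)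
              * Eu (z + of_int c * (of_int k + x) / of_int a) ((A + B) / of_int c)"
  have eL: "fps_to_fls (\<Sum>\<mu>\<in>{0..<c}. fps_const ((-1) powi \<mu> * of_int a * of_int b) * Bs (of_int a * (of_int \<mu> + z) / of_int c + x) (A / of_int a)
              * Bs (of_int b * (of_int \<mu> + z) / of_int c + y) (B / of_int b)) = M * ?mL"
    by (simp only: fps_to_fls_sum L sum_distrib_left)
  have eR1: "fps_to_fls (fps_const (of_int a * B / 2) * fps_X * (\<Sum>l\<in>{0..<b}. Bs (x - of_int a * (of_int l + y) / of_int b) (A / of_int a)
              * Es (z + of_int c * (of_int l + y) / of_int b) ((A + B) / of_int c))) = M * ?S1 / 2"
    by (simp only: sum_distrib_left fps_to_fls_sum R1 sum_divide_distrib[symmetric] times_divide_eq_right)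
  have eR2: "fps_to_fls (fps_const (of_int b * A / 2) * fps_X * (\<Sum>k\<in>{0..<a}. Bs (of_int b * (of_int k + x) / of_int a - y) (- B / of_int b)
              * Es (z + of_int c * (of_int k + x) / of_int a) ((A + B) / of_int c))) = - (M * ?S2 / 2)"
    by (simp only: sum_distrib_left fps_to_fls_sum R2 sum_divide_distrib[symmetric] times_divide_eq_right sum_negf)
  have mf: "?mL = - ?S1 / 2 + ?S2 / 2" by (rule main_fls[OF ab cc AB])
  show ?thesis
    apply (rule fps_to_fls_eq_imp_fps_eq)
    unfolding fps_to_fls_minus fps_to_fls_uminus eL eR1 eR2 mf
    by (simp add: algebra_simps)
qed


lemma tri_sigma:
  fixes G :: "nat \<Rightarrow> nat \<Rightarrow> 'a::comm_monoid_add"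
  shows "(\<Sum>j\<le>m. \<Sum>r\<le>m - j. G j r) = (\<Sum>p\<le>m. \<Sum>j\<le>p. G j (p - j))"
proof -
  have "(\<Sum>j\<le>m. \<Sum>r\<le>m - j. G j r) = (\<Sum>(j,r)\<in>Sigma {..m} (\<lambda>j. {..m-j}). G j r)"
    by (rule sum.Sigma) auto
  also have "Sigma {..m} (\<lambda>j. {..m-j}) = {(j,r). j + r \<le> m}" by auto
  also have "(\<Sum>(j,r)\<in>{(j,r). j + r \<le> m}. G j r) = (\<Sum>p\<le>m. \<Sum>j\<le>p. G j (p - j))"
    by (rule sum.triangle_reindex_eq)
  finally show ?thesis .
qed

lemma tri_swap:
  fixes f :: "nat \<Rightarrow> nat \<Rightarrow> 'a::comm_monoid_add"
  shows "(\<Sum>h\<le>m. \<Sum>r\<le>m - h. f h r) = (\<Sum>r\<le>m. \<Sum>h\<le>m - r. f h r)"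
proof -
  have "(\<Sum>h\<le>m. \<Sum>r\<le>m - h. f h r) = (\<Sum>(h,r)\<in>Sigma {..m} (\<lambda>h. {..m-h}). f h r)"
    by (rule sum.Sigma) auto
  also have "Sigma {..m} (\<lambda>h. {..m-h}) = (\<lambda>(r,h). (h,r)) ` Sigma {..m} (\<lambda>r. {..m-r})" by auto
  also have "(\<Sum>(h,r)\<in>(\<lambda>(r,h). (h,r)) ` Sigma {..m} (\<lambda>r. {..m-r}). f h r) = (\<Sum>(r,h)\<in>Sigma {..m} (\<lambda>r. {..m-r}). f h r)"
    by (subst sum.reindex) (auto simp: inj_on_def intro!: sum.cong split: prod.splits)
  also have "\<dots> = (\<Sum>r\<le>m. \<Sum>h\<le>m - r. f h r)"
    by (rule sum.Sigma[symmetric]) auto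
  finally show ?thesis .
qed

lemma conv1:
  fixes F :: "nat \<Rightarrow> real"
  shows "(\<Sum>j\<le>m. F j * x ^ j * (x + 1) ^ (m - j)) = (\<Sum>p\<le>m. (\<Sum>j\<le>p. F j * of_nat ((m - j) choose (p - j))) * x ^ p)"
proof -
  have "(\<Sum>j\<le>m. F j * x ^ j * (x + 1) ^ (m - j)) = (\<Sum>j\<le>m. \<Sum>r\<le>m - j. F j * of_nat ((m - j) choose r) * x ^ (j + r))"
    by (simp add: binomial_ring[of x 1] sum_distrib_left power_add mult_ac)
  also have "\<dots> = (\<Sum>p\<le>m. \<Sum>j\<le>p. F j * of_nat ((m - j) choose (p - j)) * x ^ (j + (p - j)))"
    by (rule tri_sigma)
  also have "\<dots> = (\<Sum>p\<le>m. (\<Sum>j\<le>p. F j * of_nat ((m - j) choose (p - j))) * x ^ p)"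
    by (simp add: sum_distrib_right)
  finally show ?thesis .
qed

lemma conv2:
  fixes H :: "nat \<Rightarrow> real"
  shows "x * (\<Sum>h\<le>m. H h * (x + 1) ^ (m - h))
    = (\<Sum>p\<le>Suc m. (if p = 0 then 0 else \<Sum>h\<le>Suc m - p. H h * of_nat ((m - h) choose (p - 1))) * x ^ p)"
proof -
  have "x * (\<Sum>h\<le>m. H h * (x + 1) ^ (m - h)) = (\<Sum>h\<le>m. \<Sum>r\<le>m - h. H h * of_nat ((m - h) choose r) * x ^ Suc r)"
    by (simp add: binomial_ring[of x 1] sum_distrib_left mult_ac)
  also have "\<dots> = (\<Sum>r\<le>m. \<Sum>h\<le>m - r. H h * of_nat ((m - h) choose r) * x ^ Suc r)"
    by (rule tri_swap)
  also have "\<dots> = (\<Sum>r\<le>m. (\<Sum>h\<le>m - r. H h * of_nat ((m - h) choose r)) * x ^ Suc r)"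
    by (simp add: sum_distrib_right)
  also have "\<dots> = (\<Sum>p\<le>Suc m. (if p = 0 then 0 else \<Sum>h\<le>Suc m - p. H h * of_nat ((m - h) choose (p - 1))) * x ^ p)"
    by (subst sum.atMost_Suc_shift) simp
  finally show ?thesis .
qed


lemma powi_a: "(x::real) \<noteq> 0 \<Longrightarrow> x powi (1 - int j) = x / x ^ j"
  by (simp add: power_int_diff)

lemma powi_c:
  assumes "(x::real) \<noteq> 0" "p + q = Suc m" "j \<le> m"
  shows "x powi (1 + int j - int p - int q) = 1 / x ^ (m - j)"
proof -
  have "1 + int j - int p - int q = - int (m - j)" using assms by simp
  then show ?thesis by (simp add: power_int_minus divide_inverse)
qed

lemma hb1:
  assumes "j \<le> p" "p \<le> m" "q = Suc m - p"
  shows "real q * real (p choose j) / (fact p * fact q) = real ((m - j) choose (p - j)) / (fact j * fact (m - j))"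
proof -
  have q: "q = Suc (m - p)" using assms by simp
  have e: "m - j - (p - j) = m - p" using assms by simp
  have le: "p - j \<le> m - j" using assms by simp
  have c2: "real ((m - j) choose (p - j)) = fact (m - j) / (fact (p - j) * fact (m - p))"
    using binomial_fact[OF le, where 'a=real] unfolding e by simp
  have c1: "real (p choose j) = fact p / (fact j * fact (p - j))" using binomial_fact[of j p] assms by simp
  have fq: "(fact q :: real) = real q * fact (m - p)" unfolding q by simp
  have qnz: "real q \<noteq> 0" using q by simp
  show ?thesis unfolding c1 c2 fq using qnz by (simp add: field_simps)
qed

lemma hb2:
  assumes "1 \<le> p" "h \<le> q" "p + q = Suc m"
  shows "real p * real (q choose h) / (fact p * fact q) = real ((m - h) choose (p - 1)) / (fact h * fact (m - h))"
proof -
  have p: "p = Suc (p - 1)" using assms by simp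
  have e: "m - h - (p - 1) = q - h" using assms by simp
  have le: "p - 1 \<le> m - h" using assms by simp
  have c2: "real ((m - h) choose (p - 1)) = fact (m - h) / (fact (p - 1) * fact (q - h))"
    using binomial_fact[OF le, where 'a=real] unfolding e by simp
  have c1: "real (q choose h) = fact q / (fact h * fact (q - h))" using binomial_fact[of h q] assms by simp
  have fp: "(fact p :: real) = real p * fact (p - 1)" using assms by (simp add: fact_reduce)
  show ?thesis unfolding c1 c2 fp using assms by (simp add: field_simps)
qed

lemma coefL:
  fixes a b c :: int and x y z \<alpha> :: real
  assumes "a > 0" "b > 0"
  shows "(\<Sum>\<mu>\<in>{0..<c}. fps_const ((-1) powi \<mu> * of_int a * of_int b) * Bs (of_int a * (of_int \<mu> + z) / of_int c + x) (\<alpha> / of_int a)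
              * Bs (of_int b * (of_int \<mu> + z) / of_int c + y) (1 / of_int b)) $ n
    = (\<Sum>p\<le>n. (real_of_int a powi (1 - int p) * real_of_int b powi (1 - int (n - p)) * S2 p (n - p) a b c x y z
          / (fact p * fact (n - p))) * \<alpha> ^ p)"
proof -
  have anz: "real_of_int a \<noteq> 0" and bnz: "real_of_int b \<noteq> 0" using assms by auto
  have "(\<Sum>\<mu>\<in>{0..<c}. fps_const ((-1) powi \<mu> * of_int a * of_int b) * Bs (of_int a * (of_int \<mu> + z) / of_int c + x) (\<alpha> / of_int a)
              * Bs (of_int b * (of_int \<mu> + z) / of_int c + y) (1 / of_int b)) $ n
    = (\<Sum>\<mu>\<in>{0..<c}. \<Sum>p\<le>n. (-1) powi \<mu> * of_int a * of_int b *
          (bernfun p (of_int a * (of_int \<mu> + z) / of_int c + x) * (\<alpha> / of_int a) ^ p / fact p) *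
          (bernfun (n - p) (of_int b * (of_int \<mu> + z) / of_int c + y) * (1 / of_int b) ^ (n - p) / fact (n - p)))"
    unfolding fps_sum_nth mult.assoc fps_mult_left_const_nth
    by (simp add: fps_mult_nth Bs_def atLeast0AtMost sum_distrib_left)
  also have "\<dots> = (\<Sum>p\<le>n. \<Sum>\<mu>\<in>{0..<c}. (real_of_int a powi (1 - int p) * real_of_int b powi (1 - int (n - p))
          / (fact p * fact (n - p))) * \<alpha> ^ p * ((-1) powi \<mu> * bernfun p (of_int a * (of_int \<mu> + z) / of_int c + x)
            * bernfun (n - p) (of_int b * (of_int \<mu> + z) / of_int c + y)))"
  proof -
    have tw: "sg * of_int a * of_int b * (B1 * (\<alpha> / of_int a) ^ p / fact p) * (B2 * (1 / of_int b) ^ (n - p) / fact (n - p))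
       = (real_of_int a powi (1 - int p) * real_of_int b powi (1 - int (n - p)) / (fact p * fact (n - p))) * \<alpha> ^ p * (sg * B1 * B2)"
      for sg B1 B2 :: real and p
      unfolding powi_a[OF anz] powi_a[OF bnz] by (simp add: anz bnz power_divide field_simps)
    show ?thesis by (subst sum.swap) (simp only: tw)
  qed
  also have "\<dots> = (\<Sum>p\<le>n. (real_of_int a powi (1 - int p) * real_of_int b powi (1 - int (n - p))
          / (fact p * fact (n - p))) * \<alpha> ^ p * S2 p (n - p) a b c x y z)"
    unfolding S2_def by (simp only: sum_distrib_left)
  also have "\<dots> = (\<Sum>p\<le>n. (real_of_int a powi (1 - int p) * real_of_int b powi (1 - int (n - p)) * S2 p (n - p) a b c x y z
          / (fact p * fact (n - p))) * \<alpha> ^ p)"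
  proof -
    have g: "(X / D) * t * S = (X * S / D) * t" for X D t S :: real by (simp add: field_simps)
    show ?thesis by (simp only: g)
  qed
  finally show ?thesis .
qed


lemma coefF1:
  fixes a b c :: int and x y z \<alpha> :: real
  assumes "a > 0" "b > 0" "c > 0"
  shows "(\<Sum>l\<in>{0..<b}. Bs (x - of_int a * (of_int l + y) / of_int b) (\<alpha> / of_int a)
              * Es (z + of_int c * (of_int l + y) / of_int b) ((\<alpha> + 1) / of_int c)) $ m
    = (\<Sum>j\<le>m. (S1 (Suc m - j) j c (- a) b z x y / (of_int a ^ j * fact j * of_int c ^ (m - j) * fact (m - j)))
          * \<alpha> ^ j * (\<alpha> + 1) ^ (m - j))"
proof -
  have anz: "real_of_int a \<noteq> 0" and bnz: "real_of_int b \<noteq> 0" and cnz: "real_of_int c \<noteq> 0" using assms by auto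
  have "(\<Sum>l\<in>{0..<b}. Bs (x - of_int a * (of_int l + y) / of_int b) (\<alpha> / of_int a)
              * Es (z + of_int c * (of_int l + y) / of_int b) ((\<alpha> + 1) / of_int c)) $ m
     = (\<Sum>l\<in>{0..<b}. \<Sum>j\<le>m. (bernfun j (x - of_int a * (of_int l + y) / of_int b) * (\<alpha> / of_int a) ^ j / fact j)
          * (eulerfun (m - j) (z + of_int c * (of_int l + y) / of_int b) * ((\<alpha> + 1) / of_int c) ^ (m - j) / fact (m - j)))"
    unfolding fps_sum_nth by (simp add: fps_mult_nth Bs_def Es_def atLeast0AtMost)
  also have "\<dots> = (\<Sum>j\<le>m. \<Sum>l\<in>{0..<b}. (1 / (of_int a ^ j * fact j * of_int c ^ (m - j) * fact (m - j))) * \<alpha> ^ j * (\<alpha> + 1) ^ (m - j)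
          * (eulerfun (m - j) (z + of_int c * (of_int l + y) / of_int b) * bernfun j (x - of_int a * (of_int l + y) / of_int b)))"
  proof -
    have tw: "(B1 * (\<alpha> / of_int a) ^ j / fact j) * (E1 * ((\<alpha> + 1) / of_int c) ^ (m - j) / fact (m - j))
      = (1 / (of_int a ^ j * fact j * of_int c ^ (m - j) * fact (m - j))) * \<alpha> ^ j * (\<alpha> + 1) ^ (m - j) * (E1 * B1)"
      for B1 E1 :: real and j
      by (simp add: anz cnz power_divide field_simps)
    show ?thesis by (subst sum.swap) (simp only: tw)
  qed
  also have "\<dots> = (\<Sum>j\<le>m. (1 / (of_int a ^ j * fact j * of_int c ^ (m - j) * fact (m - j))) * \<alpha> ^ j * (\<alpha> + 1) ^ (m - j)
          * S1 (Suc m - j) j c (- a) b z x y)"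
  proof (rule sum.cong[OF refl])
    fix j assume j: "j \<in> {..m}"
    have e: "Suc m - j - 1 = m - j" using j by simp
    have args: "of_int c * (of_int l + y) / of_int b + z = z + of_int c * (of_int l + y) / of_int b"
       "of_int (- a) * (of_int l + y) / of_int b + x = x - of_int a * (of_int l + y) / of_int b" for l :: int
      by (simp_all add: algebra_simps diff_divide_distrib add_divide_distrib)
    show "(\<Sum>l\<in>{0..<b}. (1 / (of_int a ^ j * fact j * of_int c ^ (m - j) * fact (m - j))) * \<alpha> ^ j * (\<alpha> + 1) ^ (m - j)
          * (eulerfun (m - j) (z + of_int c * (of_int l + y) / of_int b) * bernfun j (x - of_int a * (of_int l + y) / of_int b)))
      = (1 / (of_int a ^ j * fact j * of_int c ^ (m - j) * fact (m - j))) * \<alpha> ^ j * (\<alpha> + 1) ^ (m - j)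
          * S1 (Suc m - j) j c (- a) b z x y"
      unfolding S1_def e args by (simp only: sum_distrib_left)
  qed
  also have "\<dots> = (\<Sum>j\<le>m. (S1 (Suc m - j) j c (- a) b z x y / (of_int a ^ j * fact j * of_int c ^ (m - j) * fact (m - j)))
          * \<alpha> ^ j * (\<alpha> + 1) ^ (m - j))"
    by (rule sum.cong[OF refl]) (simp add: field_simps)
  finally show ?thesis .
qed

lemma coefF2:
  fixes a b c :: int and x y z \<alpha> :: real
  assumes "a > 0" "b > 0" "c > 0"
  shows "(\<Sum>k\<in>{0..<a}. Bs (of_int b * (of_int k + x) / of_int a - y) (- 1 / of_int b)
              * Es (z + of_int c * (of_int k + x) / of_int a) ((\<alpha> + 1) / of_int c)) $ m
    = (\<Sum>h\<le>m. (S1 (Suc m - h) h c b a z (- y) x * (- 1 / of_int b) ^ h / (fact h * of_int c ^ (m - h) * fact (m - h)))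
          * (\<alpha> + 1) ^ (m - h))"
proof -
  have anz: "real_of_int a \<noteq> 0" and bnz: "real_of_int b \<noteq> 0" and cnz: "real_of_int c \<noteq> 0" using assms by auto
  have "(\<Sum>k\<in>{0..<a}. Bs (of_int b * (of_int k + x) / of_int a - y) (- 1 / of_int b)
              * Es (z + of_int c * (of_int k + x) / of_int a) ((\<alpha> + 1) / of_int c)) $ m
     = (\<Sum>k\<in>{0..<a}. \<Sum>h\<le>m. (bernfun h (of_int b * (of_int k + x) / of_int a - y) * (- 1 / of_int b) ^ h / fact h)
          * (eulerfun (m - h) (z + of_int c * (of_int k + x) / of_int a) * ((\<alpha> + 1) / of_int c) ^ (m - h) / fact (m - h)))"
    unfolding fps_sum_nth by (simp add: fps_mult_nth Bs_def Es_def atLeast0AtMost)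
  also have "\<dots> = (\<Sum>h\<le>m. \<Sum>k\<in>{0..<a}. ((- 1 / of_int b) ^ h / (fact h * of_int c ^ (m - h) * fact (m - h))) * (\<alpha> + 1) ^ (m - h)
          * (eulerfun (m - h) (z + of_int c * (of_int k + x) / of_int a) * bernfun h (of_int b * (of_int k + x) / of_int a - y)))"
  proof -
    have tw: "(B1 * (- 1 / of_int b) ^ h / fact h) * (E1 * ((\<alpha> + 1) / of_int c) ^ (m - h) / fact (m - h))
      = ((- 1 / of_int b) ^ h / (fact h * of_int c ^ (m - h) * fact (m - h))) * (\<alpha> + 1) ^ (m - h) * (E1 * B1)"
      for B1 E1 :: real and h
      by (simp add: cnz power_divide field_simps)
    show ?thesis by (subst sum.swap) (simp only: tw)
  qed
  also have "\<dots> = (\<Sum>h\<le>m. ((- 1 / of_int b) ^ h / (fact h * of_int c ^ (m - h) * fact (m - h))) * (\<alpha> + 1) ^ (m - h)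
          * S1 (Suc m - h) h c b a z (- y) x)"
  proof (rule sum.cong[OF refl])
    fix h assume h: "h \<in> {..m}"
    have e: "Suc m - h - 1 = m - h" using h by simp
    have args: "of_int c * (of_int k + x) / of_int a + z = z + of_int c * (of_int k + x) / of_int a"
       "of_int b * (of_int k + x) / of_int a + - y = of_int b * (of_int k + x) / of_int a - y" for k :: int
      by (simp_all add: algebra_simps)
    show "(\<Sum>k\<in>{0..<a}. ((- 1 / of_int b) ^ h / (fact h * of_int c ^ (m - h) * fact (m - h))) * (\<alpha> + 1) ^ (m - h)
          * (eulerfun (m - h) (z + of_int c * (of_int k + x) / of_int a) * bernfun h (of_int b * (of_int k + x) / of_int a - y)))
      = ((- 1 / of_int b) ^ h / (fact h * of_int c ^ (m - h) * fact (m - h))) * (\<alpha> + 1) ^ (m - h)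
          * S1 (Suc m - h) h c b a z (- y) x"
      unfolding S1_def e args by (simp only: sum_distrib_left)
  qed
  also have "\<dots> = (\<Sum>h\<le>m. (S1 (Suc m - h) h c b a z (- y) x * (- 1 / of_int b) ^ h / (fact h * of_int c ^ (m - h) * fact (m - h)))
          * (\<alpha> + 1) ^ (m - h))"
    by (rule sum.cong[OF refl]) (simp add: field_simps)
  finally show ?thesis .
qed


lemma R1eq:
  fixes a c :: int
  assumes "a > 0" "c > 0" "p \<le> Suc m"
  shows "- (real (Suc m - p) / 2) * (\<Sum>j=0..p. real (p choose j) * real_of_int a powi (1 - int j)
            * real_of_int c powi (1 + int j - int p - int (Suc m - p)) * S1 (p + (Suc m - p) - j) j c (- a) b z x y)
          / (fact p * fact (Suc m - p))
    = (if p \<le> m then - (of_int a / 2) * (\<Sum>j\<le>p. (S1 (Suc m - j) j c (- a) b z x y / (of_int a ^ j * fact j * of_int c ^ (m - j) * fact (m - j)))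
            * of_nat ((m - j) choose (p - j))) else 0)"
proof (cases "p \<le> m")
  case False
  then have "p = Suc m" using assms by simp
  then show ?thesis by simp
next
  case True
  define q where "q = Suc m - p"
  have pq: "p + q = Suc m" using True unfolding q_def by simp
  have anz: "real_of_int a \<noteq> 0" and cnz: "real_of_int c \<noteq> 0" using assms by auto
  have "- (real q / 2) * (\<Sum>j=0..p. real (p choose j) * real_of_int a powi (1 - int j)
            * real_of_int c powi (1 + int j - int p - int q) * S1 (p + q - j) j c (- a) b z x y)
          / (fact p * fact q)
      = (\<Sum>j\<le>p. - (1/2) * (real q * real (p choose j) / (fact p * fact q)) * real_of_int a powi (1 - int j)
            * real_of_int c powi (1 + int j - int p - int q) * S1 (p + q - j) j c (- a) b z x y)"
    by (simp add: atLeast0AtMost sum_distrib_left sum_divide_distrib field_simps)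
  also have "\<dots> = (\<Sum>j\<le>p. - (of_int a / 2) * ((S1 (Suc m - j) j c (- a) b z x y / (of_int a ^ j * fact j * of_int c ^ (m - j) * fact (m - j)))
            * of_nat ((m - j) choose (p - j))))"
  proof (rule sum.cong[OF refl])
    fix j assume j: "j \<in> {..p}"
    then have jp: "j \<le> p" and jm: "j \<le> m" using True by auto
    have h1: "real q * real (p choose j) / (fact p * fact q) = real ((m - j) choose (p - j)) / (fact j * fact (m - j))"
      by (rule hb1[OF jp True]) (simp add: q_def)
    show "- (1/2) * (real q * real (p choose j) / (fact p * fact q)) * real_of_int a powi (1 - int j)
            * real_of_int c powi (1 + int j - int p - int q) * S1 (p + q - j) j c (- a) b z x y
        = - (of_int a / 2) * ((S1 (Suc m - j) j c (- a) b z x y / (of_int a ^ j * fact j * of_int c ^ (m - j) * fact (m - j)))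
            * of_nat ((m - j) choose (p - j)))"
      unfolding h1 powi_a[OF anz] powi_c[OF cnz pq jm] pq by (simp add: field_simps)
  qed
  finally show ?thesis using True unfolding q_def by (simp add: sum_distrib_left)
qed

lemma R2eq:
  fixes b c :: int
  assumes "b > 0" "c > 0" "p \<le> Suc m"
  shows "- (real p / 2) * (\<Sum>h=0..Suc m - p. real ((Suc m - p) choose h) * (-1) ^ h * real_of_int b powi (1 - int h)
            * real_of_int c powi (1 + int h - int p - int (Suc m - p)) * S1 (p + (Suc m - p) - h) h c b a z (- y) x)
          / (fact p * fact (Suc m - p))
    = - (of_int b / 2) * (if p = 0 then 0 else \<Sum>h\<le>Suc m - p. (S1 (Suc m - h) h c b a z (- y) x * (- 1 / of_int b) ^ h / (fact h * of_int c ^ (m - h) * fact (m - h)))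
            * of_nat ((m - h) choose (p - 1)))"
proof (cases "p = 0")
  case True
  then show ?thesis by simp
next
  case False
  define q where "q = Suc m - p"
  have pq: "p + q = Suc m" using assms unfolding q_def by simp
  have p1: "1 \<le> p" using False by simp
  have bnz: "real_of_int b \<noteq> 0" and cnz: "real_of_int c \<noteq> 0" using assms by auto
  have "- (real p / 2) * (\<Sum>h=0..q. real (q choose h) * (-1) ^ h * real_of_int b powi (1 - int h)
            * real_of_int c powi (1 + int h - int p - int q) * S1 (p + q - h) h c b a z (- y) x)
          / (fact p * fact q)
      = (\<Sum>h\<le>q. - (1/2) * (real p * real (q choose h) / (fact p * fact q)) * (-1) ^ h * real_of_int b powi (1 - int h)
            * real_of_int c powi (1 + int h - int p - int q) * S1 (p + q - h) h c b a z (- y) x)"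
    by (simp add: atLeast0AtMost sum_distrib_left sum_divide_distrib field_simps)
  also have "\<dots> = (\<Sum>h\<le>q. - (of_int b / 2) * ((S1 (Suc m - h) h c b a z (- y) x * (- 1 / of_int b) ^ h / (fact h * of_int c ^ (m - h) * fact (m - h)))
            * of_nat ((m - h) choose (p - 1))))"
  proof (rule sum.cong[OF refl])
    fix h assume h: "h \<in> {..q}"
    then have hq: "h \<le> q" and hm: "h \<le> m" using pq p1 by auto
    have h2: "real p * real (q choose h) / (fact p * fact q) = real ((m - h) choose (p - 1)) / (fact h * fact (m - h))"
      by (rule hb2[OF p1 hq pq])
    have pw: "(- 1 / real_of_int b) ^ h = (-1) ^ h / real_of_int b ^ h" by (rule power_divide)
    show "- (1/2) * (real p * real (q choose h) / (fact p * fact q)) * (-1) ^ h * real_of_int b powi (1 - int h)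
            * real_of_int c powi (1 + int h - int p - int q) * S1 (p + q - h) h c b a z (- y) x
        = - (of_int b / 2) * ((S1 (Suc m - h) h c b a z (- y) x * (- 1 / of_int b) ^ h / (fact h * of_int c ^ (m - h) * fact (m - h)))
            * of_nat ((m - h) choose (p - 1)))"
      unfolding h2 powi_a[OF bnz] powi_c[OF cnz pq hm] pq pw by (simp add: field_simps)
  qed
  finally show ?thesis using False unfolding q_def by (simp add: sum_distrib_left)
qed


definition RT :: "int \<Rightarrow> int \<Rightarrow> int \<Rightarrow> real \<Rightarrow> real \<Rightarrow> real \<Rightarrow> nat \<Rightarrow> nat \<Rightarrow> real" where
  "RT a b c x y z p q = - (real q / 2) * (\<Sum>j=0..p. real (p choose j) * real_of_int a powi (1 - int j)
            * real_of_int c powi (1 + int j - int p - int q)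
            * S1 (p + q - j) j c (- a) b z x y)
      - (real p / 2) * (\<Sum>h=0..q. real (q choose h) * (-1) ^ h * real_of_int b powi (1 - int h)
            * real_of_int c powi (1 + int h - int p - int q)
            * S1 (p + q - h) h c b a z (- y) x)"

lemma coefR:
  fixes a b c :: int and x y z \<alpha> :: real
  assumes "a > 0" "b > 0" "c > 0"
  shows "(- (fps_const (of_int a * 1 / 2) * fps_X * (\<Sum>l\<in>{0..<b}. Bs (x - of_int a * (of_int l + y) / of_int b) (\<alpha> / of_int a)
              * Es (z + of_int c * (of_int l + y) / of_int b) ((\<alpha> + 1) / of_int c)))
      - fps_const (of_int b * \<alpha> / 2) * fps_X * (\<Sum>k\<in>{0..<a}. Bs (of_int b * (of_int k + x) / of_int a - y) (- 1 / of_int b)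
              * Es (z + of_int c * (of_int k + x) / of_int a) ((\<alpha> + 1) / of_int c))) $ Suc m
    = (\<Sum>p\<le>Suc m. (RT a b c x y z p (Suc m - p) / (fact p * fact (Suc m - p))) * \<alpha> ^ p)"
proof -
  define FF where "FF j = S1 (Suc m - j) j c (- a) b z x y / (of_int a ^ j * fact j * of_int c ^ (m - j) * fact (m - j))" for j
  define HH where "HH h = S1 (Suc m - h) h c b a z (- y) x * (- 1 / of_int b) ^ h / (fact h * of_int c ^ (m - h) * fact (m - h))" for h
  define K1 where "K1 p = (\<Sum>j\<le>p. FF j * of_nat ((m - j) choose (p - j)))" for p
  define K2 where "K2 p = (if p = 0 then 0 else \<Sum>h\<le>Suc m - p. HH h * of_nat ((m - h) choose (p - 1)))" for p
  let ?F1 = "\<Sum>l\<in>{0..<b}. Bs (x - of_int a * (of_int l + y) / of_int b) (\<alpha> / of_int a)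
              * Es (z + of_int c * (of_int l + y) / of_int b) ((\<alpha> + 1) / of_int c)"
  let ?F2 = "\<Sum>k\<in>{0..<a}. Bs (of_int b * (of_int k + x) / of_int a - y) (- 1 / of_int b)
              * Es (z + of_int c * (of_int k + x) / of_int a) ((\<alpha> + 1) / of_int c)"
  have f1: "?F1 $ m = (\<Sum>p\<le>m. K1 p * \<alpha> ^ p)"
    unfolding coefF1[OF assms] FF_def[symmetric] K1_def by (rule conv1)
  have f2: "\<alpha> * ?F2 $ m = (\<Sum>p\<le>Suc m. K2 p * \<alpha> ^ p)"
    unfolding coefF2[OF assms] HH_def[symmetric] K2_def by (rule conv2)
  have "(- (fps_const (of_int a * 1 / 2) * fps_X * ?F1) - fps_const (of_int b * \<alpha> / 2) * fps_X * ?F2) $ Suc m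
      = - (of_int a / 2) * ?F1 $ m - (of_int b / 2) * (\<alpha> * ?F2 $ m)"
    by (simp only: fps_sub_nth fps_neg_nth mult.assoc fps_mult_left_const_nth fps_X_mult_nth) simp
  also have "\<dots> = (\<Sum>p\<le>Suc m. ((if p \<le> m then - (of_int a / 2) * K1 p else 0) + (- (of_int b / 2) * K2 p)) * \<alpha> ^ p)"
  proof -
    have e1: "(\<Sum>p\<le>Suc m. (if p \<le> m then - (of_int a / 2) * K1 p else 0) * \<alpha> ^ p) = - (of_int a / 2) * (\<Sum>p\<le>m. K1 p * \<alpha> ^ p)"
      by (simp add: sum_distrib_left mult.assoc)
    have e2: "(\<Sum>p\<le>Suc m. (- (of_int b / 2) * K2 p) * \<alpha> ^ p) = - (of_int b / 2) * (\<Sum>p\<le>Suc m. K2 p * \<alpha> ^ p)"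
      by (simp only: sum_distrib_left mult.assoc)
    show ?thesis unfolding distrib_right sum.distrib e1 e2 f1 f2 by simp
  qed
  also have "\<dots> = (\<Sum>p\<le>Suc m. (RT a b c x y z p (Suc m - p) / (fact p * fact (Suc m - p))) * \<alpha> ^ p)"
  proof (rule sum.cong[OF refl])
    fix p assume p: "p \<in> {..Suc m}"
    then have pm: "p \<le> Suc m" by simp
    have "RT a b c x y z p (Suc m - p) / (fact p * fact (Suc m - p))
       = - (real (Suc m - p) / 2) * (\<Sum>j=0..p. real (p choose j) * real_of_int a powi (1 - int j)
            * real_of_int c powi (1 + int j - int p - int (Suc m - p)) * S1 (p + (Suc m - p) - j) j c (- a) b z x y)
          / (fact p * fact (Suc m - p))
       + - (real p / 2) * (\<Sum>h=0..Suc m - p. real ((Suc m - p) choose h) * (-1) ^ h * real_of_int b powi (1 - int h)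
            * real_of_int c powi (1 + int h - int p - int (Suc m - p)) * S1 (p + (Suc m - p) - h) h c b a z (- y) x)
          / (fact p * fact (Suc m - p))"
      unfolding RT_def by (simp add: diff_divide_distrib)
    also have "\<dots> = (if p \<le> m then - (of_int a / 2) * K1 p else 0) + (- (of_int b / 2) * K2 p)"
      unfolding R1eq[OF assms(1) assms(3) pm] R2eq[OF assms(2) assms(3) pm] K1_def K2_def FF_def HH_def ..
    finally show "((if p \<le> m then - (of_int a / 2) * K1 p else 0) + (- (of_int b / 2) * K2 p)) * \<alpha> ^ p
        = (RT a b c x y z p (Suc m - p) / (fact p * fact (Suc m - p))) * \<alpha> ^ p" by simp
  qed
  finally show ?thesis .
qed


theorem theorem4:
  fixes a b c :: int and p q :: nat and x y z :: real
  assumes "a > 0" and "b > 0" and "c > 0" and "even c"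
    and "p \<ge> 1" and "q \<ge> 1"
  shows "real_of_int a powi (1 - int p) * real_of_int b powi (1 - int q) * S2 p q a b c x y z
    = - (real q / 2) * (\<Sum>j=0..p. real (p choose j) * real_of_int a powi (1 - int j)
            * real_of_int c powi (1 + int j - int p - int q)
            * S1 (p + q - j) j c (- a) b z x y)
      - (real p / 2) * (\<Sum>h=0..q. real (q choose h) * (-1) ^ h * real_of_int b powi (1 - int h)
            * real_of_int c powi (1 + int h - int p - int q)
            * S1 (p + q - h) h c b a z (- y) x)"
proof -
  define n where "n = p + q"
  define m where "m = n - 1"
  have nm: "n = Suc m" using assms(5) unfolding m_def n_def by simp
  define Lc where "Lc k = real_of_int a powi (1 - int k) * real_of_int b powi (1 - int (n - k)) * S2 k (n - k) a b c x y z
          / (fact k * fact (n - k))" for k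
  define Rc where "Rc k = RT a b c x y z k (n - k) / (fact k * fact (n - k))" for k
  have poly: "(\<Sum>k\<le>n. (Lc k - Rc k) * \<alpha> ^ k) = 0" if "\<alpha> > 0" for \<alpha> :: real
  proof -
    have AB: "\<alpha> \<noteq> 0" "(1::real) \<noteq> 0" "\<alpha> + 1 \<noteq> 0" using that by auto
    note mf = main_fps[OF assms(1,2,3,4) AB]
    have "(\<Sum>k\<le>n. Lc k * \<alpha> ^ k) = (\<Sum>k\<le>n. Rc k * \<alpha> ^ k)"
    proof -
      have "(\<Sum>k\<le>n. Lc k * \<alpha> ^ k) = (\<Sum>\<mu>\<in>{0..<c}. fps_const ((-1) powi \<mu> * of_int a * of_int b) * Bs (of_int a * (of_int \<mu> + z) / of_int c + x) (\<alpha> / of_int a)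
              * Bs (of_int b * (of_int \<mu> + z) / of_int c + y) (1 / of_int b)) $ n"
        unfolding coefL[OF assms(1,2)] Lc_def ..
      also have "\<dots> = (- (fps_const (of_int a * 1 / 2) * fps_X * (\<Sum>l\<in>{0..<b}. Bs (x - of_int a * (of_int l + y) / of_int b) (\<alpha> / of_int a)
              * Es (z + of_int c * (of_int l + y) / of_int b) ((\<alpha> + 1) / of_int c)))
      - fps_const (of_int b * \<alpha> / 2) * fps_X * (\<Sum>k\<in>{0..<a}. Bs (of_int b * (of_int k + x) / of_int a - y) (- 1 / of_int b)
              * Es (z + of_int c * (of_int k + x) / of_int a) ((\<alpha> + 1) / of_int c))) $ n"
        by (rule arg_cong[where f="\<lambda>f. f $ n"], rule mf)
      also have "\<dots> = (\<Sum>k\<le>n. Rc k * \<alpha> ^ k)"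
        unfolding nm coefR[OF assms(1,2,3)] Rc_def ..
      finally show ?thesis .
    qed
    then show ?thesis by (simp add: left_diff_distrib sum_subtractf)
  qed
  have allz: "\<forall>k\<le>n. Lc k - Rc k = 0"
  proof (rule ccontr)
    assume "\<not> (\<forall>k\<le>n. Lc k - Rc k = 0)"
    then have "finite {\<alpha>::real. (\<Sum>k\<le>n. (Lc k - Rc k) * \<alpha> ^ k) = 0}"
      using polyfun_finite_roots[of "\<lambda>k. Lc k - Rc k" n] by blast
    moreover have "{0::real<..} \<subseteq> {\<alpha>::real. (\<Sum>k\<le>n. (Lc k - Rc k) * \<alpha> ^ k) = 0}"
      using poly by auto
    ultimately show False using infinite_Ioi[of "0::real"] finite_subset by blast
  qed
  then have "Lc p = Rc p" unfolding n_def by simp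
  then have "real_of_int a powi (1 - int p) * real_of_int b powi (1 - int q) * S2 p q a b c x y z = RT a b c x y z p q"
    unfolding Lc_def Rc_def n_def by (simp add: divide_cancel_right)
  then show ?thesis unfolding RT_def .
qed

end
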